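(* Let $M_b=\langle S_b,A_b,T_b\rangle$ be the $b$-bounded MDP of a relational MDP $K=\langle\Sigma,\Delta\rangle$, $\phi$ a relational pCTL sentence, and $C=consts(\phi)\cup consts(\Delta)$. Let $s_1,s_2\in S_b$ with $s_1\sim_C s_2$ via the bijection $f:consts(s_1)\setminus C\to consts(s_2)\setminus C$ (extended by the identity on $C$). Then for every transition rule $H_i\xleftarrow{p_i:\alpha}B$ of $\Delta$, $s_1$ can fire the rule iff $s_2$ can: for every substitution $\theta_1$, $s_1\preceq_{\theta_1}B$ iff $s_2\preceq_{\theta_2}B$, where $\theta_2=f\circ\theta_1$ is the corresponding indistinguishable substitution.
   Context: Relational logic: terms are variables or constants; atoms $p(t_1,\dots,t_m)$; an abstract state is a finite set of atoms. Object identity assumption: distinct terms in a conjunction denote distinct objects. OI-subsumption: $A\preceq_\theta B$ iff $\theta$ is a substitution with $B\theta\subseteq A$ mapping distinct terms of $B$ to distinct terms. A Herbrand interpretation is a set of ground atoms; $\mathit{adom}(s)=consts(s)$. Relational MDP $K=\langle\Sigma,\Delta\rangle$, $\Sigma=\langle R,D\rangle$ ($R$ finite relation symbols, $D$ possibly infinite constants); $\Delta$ a finite set of abstract transitions, each a set of rules $\{H_1\xleftarrow{p_1:\alpha}B,\dots,H_n\xleftarrow{p_n:\alpha}B\}$ with abstract states $H_i,B$, $\sum_ip_i=1$, $vars(H_i)\subseteq vars(B)$. The underlying ground MDP has Herbrand interpretations as states; from $s$, for each $\theta$ with $s\preceq_\theta B$, action $\alpha\theta$ leads to $(s\setminus B\theta)\cup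 H_i\theta$ with probability $p_i$. The $b$-bounded MDP $M_b$ restricts to states $s$ with $|\mathit{adom}(s)|\le b$ and transitions between such states. Indistinguishability: for $s_1,s_2\in S_b$ with $C_1=consts(s_1)$, $C_2=consts(s_2)$ and $C\subseteq C_1\cap C_2$, $s_1\sim_C s_2$ iff there is a bijection $f:C_1\setminus C\to C_2\setminus C$ such that renaming the constants of $s_1$ by $f$ (and fixing $C$) yields $s_2$, i.e. $f(s_1)=s_2$. *)

theory Defs
  imports Complex_Main
begin

datatype ('v, 'c) rterm = Var 'v | Const 'c

type_synonym ('p, 'v, 'c) ratom = "'p \<times> ('v, 'c) rterm list"

definition terms :: "('p, 'v, 'c) ratom set \<Rightarrow> ('v, 'c) rterm set" where
  "terms A = (\<Union>a\<in>A. set (snd a))"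

definition consts_of :: "('p, 'v, 'c) ratom set \<Rightarrow> 'c set" where
  "consts_of A = {c. Const c \<in> terms A}"

definition vars_of :: "('p, 'v, 'c) ratom set \<Rightarrow> 'v set" where
  "vars_of A = {x. Var x \<in> terms A}"

definition ground :: "('p, 'v, 'c) ratom set \<Rightarrow> bool" where
  "ground A \<longleftrightarrow> vars_of A = {}"

definition adom :: "('p, 'v, 'c) ratom set \<Rightarrow> 'c set" where
  "adom s = consts_of s"

type_synonym ('v, 'c) subst = "'v \<Rightarrow> ('v, 'c) rterm"

fun subst_term :: "('v, 'c) subst \<Rightarrow> ('v, 'c) rterm \<Rightarrow> ('v, 'c) rterm" where
  "subst_term \<theta> (Var x) = \<theta> x"
| "subst_term \<theta> (Const c) = Const c"

definition subst_atom :: "('v, 'c) subst \<Rightarrow> ('p, 'v, 'c) ratom \<Rightarrow> ('p, 'v, 'c) ratom" where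
  "subst_atom \<theta> a = (fst a, map (subst_term \<theta>) (snd a))"

definition subst_set :: "('p, 'v, 'c) ratom set \<Rightarrow> ('v, 'c) subst \<Rightarrow> ('p, 'v, 'c) ratom set" where
  "subst_set B \<theta> = subst_atom \<theta> ` B"

definition oi_subsumes :: "('p, 'v, 'c) ratom set \<Rightarrow> ('v, 'c) subst \<Rightarrow> ('p, 'v, 'c) ratom set \<Rightarrow> bool" where
  "oi_subsumes A \<theta> B \<longleftrightarrow> subst_set B \<theta> \<subseteq> A \<and> inj_on (subst_term \<theta>) (terms B)"

fun rename_term :: "('c \<Rightarrow> 'c) \<Rightarrow> ('v, 'c) rterm \<Rightarrow> ('v, 'c) rterm" where
  "rename_term g (Var x) = Var x"
| "rename_term g (Const c) = Const (g c)"

definition rename_set :: "('c \<Rightarrow> 'c) \<Rightarrow> ('p, 'v, 'c) ratom set \<Rightarrow> ('p, 'v, 'c) ratom set" where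
  "rename_set g s = (\<lambda>a. (fst a, map (rename_term g) (snd a))) ` s"

definition ext_id :: "'c set \<Rightarrow> ('c \<Rightarrow> 'c) \<Rightarrow> 'c \<Rightarrow> 'c" where
  "ext_id C f c = (if c \<in> C then c else f c)"

type_synonym ('p, 'a, 'v, 'c) rule =
  "('p, 'v, 'c) ratom set \<times> real \<times> ('a, 'v, 'c) ratom \<times> ('p, 'v, 'c) ratom set"

definition rhead :: "('p, 'a, 'v, 'c) rule \<Rightarrow> ('p, 'v, 'c) ratom set" where
  "rhead r = fst r"
definition rprob :: "('p, 'a, 'v, 'c) rule \<Rightarrow> real" where
  "rprob r = fst (snd r)"
definition raction :: "('p, 'a, 'v, 'c) rule \<Rightarrow> ('a, 'v, 'c) ratom" where
  "raction r = fst (snd (snd r))"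
definition rbody :: "('p, 'a, 'v, 'c) rule \<Rightarrow> ('p, 'v, 'c) ratom set" where
  "rbody r = snd (snd (snd r))"

record ('p, 'a, 'v, 'c) rmdp =
  rels :: "'p set"
  arity :: "'p \<Rightarrow> nat"
  dom :: "'c set"
  trans :: "('p, 'a, 'v, 'c) rule set set"

definition wf_atom :: "('p, 'a, 'v, 'c) rmdp \<Rightarrow> ('p, 'v, 'c) ratom \<Rightarrow> bool" where
  "wf_atom K a \<longleftrightarrow> fst a \<in> rels K \<and> length (snd a) = arity K (fst a)
     \<and> (\<forall>c. Const c \<in> set (snd a) \<longrightarrow> c \<in> dom K)"

definition wf_rmdp :: "('p, 'a, 'v, 'c) rmdp \<Rightarrow> bool" where
  "wf_rmdp K \<longleftrightarrow> finite (rels K) \<and> finite (trans K) \<and>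
     (\<forall>T\<in>trans K. finite T \<and> T \<noteq> {} \<and>
        (\<exists>\<alpha> B. \<forall>r\<in>T. raction r = \<alpha> \<and> rbody r = B) \<and>
        (\<Sum>r\<in>T. rprob r) = 1 \<and>
        (\<forall>r\<in>T. 0 \<le> rprob r \<and> finite (rhead r) \<and> finite (rbody r)
           \<and> (\<forall>a\<in>rhead r. wf_atom K a) \<and> (\<forall>a\<in>rbody r. wf_atom K a)
           \<and> (\<forall>c. Const c \<in> set (snd (raction r)) \<longrightarrow> c \<in> dom K)
           \<and> vars_of (rhead r) \<subseteq> vars_of (rbody r)))"

definition consts_trans :: "('p, 'a, 'v, 'c) rmdp \<Rightarrow> 'c set" where
  "consts_trans K = (\<Union>T\<in>trans K. \<Union>r\<in>T.
      consts_of (rhead r) \<union> consts_of (rbody r) \<union> {c. Const c \<in> set (snd (raction r))})"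

definition herbrand :: "('p, 'a, 'v, 'c) rmdp \<Rightarrow> ('p, 'v, 'c) ratom set \<Rightarrow> bool" where
  "herbrand K s \<longleftrightarrow> ground s \<and> (\<forall>a\<in>s. wf_atom K a)"

definition bstates :: "('p, 'a, 'v, 'c) rmdp \<Rightarrow> nat \<Rightarrow> ('p, 'v, 'c) ratom set set" where
  "bstates K b = {s. herbrand K s \<and> finite (adom s) \<and> card (adom s) \<le> b}"

definition indist_via :: "'c set \<Rightarrow> ('c \<Rightarrow> 'c) \<Rightarrow> ('p, 'v, 'c) ratom set \<Rightarrow> ('p, 'v, 'c) ratom set \<Rightarrow> bool" where
  "indist_via C f s1 s2 \<longleftrightarrow> C \<subseteq> consts_of s1 \<inter> consts_of s2 \<and>
     bij_betw f (consts_of s1 - C) (consts_of s2 - C) \<and>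
     rename_set (ext_id C f) s1 = s2"

end

theory Submission
  imports Defs
begin

lemma ext_inj:
  assumes "indist_via C f s1 s2"
  shows "inj_on (ext_id C f) (consts_of s1)"
proof (rule inj_onI)
  fix x y assume x: "x \<in> consts_of s1" and y: "y \<in> consts_of s1"
    and e: "ext_id C f x = ext_id C f y"
  have bij: "bij_betw f (consts_of s1 - C) (consts_of s2 - C)"
    using assms unfolding indist_via_def by blast
  have fx: "x \<notin> C \<Longrightarrow> f x \<notin> C" using bij x bij_betwE by fastforce
  have fy: "y \<notin> C \<Longrightarrow> f y \<notin> C" using bij y bij_betwE by fastforce
  show "x = y"
  proof (cases "x \<in> C"; cases "y \<in> C")
    assume "x \<notin> C" "y \<notin> C"
    then show ?thesis using e x y bij unfolding ext_id_def bij_betw_def inj_on_def by auto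
  qed (use e fx fy in \<open>auto simp: ext_id_def\<close>)
qed

definition DD :: "'c set \<Rightarrow> ('v, 'c) rterm set" where
  "DD X = {t. \<forall>c. t = Const c \<longrightarrow> c \<in> X}"

lemma rename_inj:
  assumes "inj_on g X"
  shows "inj_on (rename_term g) (DD X)"
proof (rule inj_onI)
  fix s t assume "s \<in> DD X" "t \<in> DD X" "rename_term g s = rename_term g t"
  then show "s = t" using assms unfolding DD_def inj_on_def
    by (cases s; cases t) auto
qed

lemma terms_mem: "a \<in> A \<Longrightarrow> t \<in> set (snd a) \<Longrightarrow> t \<in> terms A"
  unfolding terms_def by blast

theorem proposition1:
  fixes K :: "('p, 'a, 'v, 'c) rmdp" and b :: nat
    and Cphi :: "'c set" and C :: "'c set"
    and s1 s2 :: "('p, 'v, 'c) ratom set" and f :: "'c \<Rightarrow> 'c"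
  assumes "wf_rmdp K"
    and "finite Cphi" and "Cphi \<subseteq> dom K"
    and "C = Cphi \<union> consts_trans K"
    and "s1 \<in> bstates K b" and "s2 \<in> bstates K b"
    and "indist_via C f s1 s2"
  shows "\<forall>T\<in>trans K. \<forall>r\<in>T. \<forall>\<theta>1 :: ('v, 'c) subst.
           (\<forall>x\<in>vars_of (rbody r). \<theta>1 x \<in> Const ` consts_of s1) \<longrightarrow>
           (oi_subsumes s1 \<theta>1 (rbody r) \<longleftrightarrow>
            oi_subsumes s2 (\<lambda>x. rename_term (ext_id C f) (\<theta>1 x)) (rbody r))"
proof (intro ballI allI impI)
  fix T r and \<theta>1 :: "('v, 'c) subst"
  assume T: "T \<in> trans K" and r: "r \<in> T"
    and th: "\<forall>x\<in>vars_of (rbody r). \<theta>1 x \<in> Const ` consts_of s1"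
  define g where "g = ext_id C f"
  define \<theta>2 where "\<theta>2 = (\<lambda>x. rename_term g (\<theta>1 x))"
  define B where "B = rbody r"
  define ren where "ren = (\<lambda>a :: ('p, 'v, 'c) ratom. (fst a, map (rename_term g) (snd a)))"
  have Csub: "C \<subseteq> consts_of s1" using assms(7) unfolding indist_via_def by blast
  have s2: "s2 = ren ` s1" using assms(7) unfolding indist_via_def rename_set_def ren_def g_def by blast
  have ginj: "inj_on g (consts_of s1)" using ext_inj[OF assms(7)] g_def by simp
  have rinj: "inj_on (rename_term g) (DD (consts_of s1))" by (rule rename_inj[OF ginj])
  have BC: "c \<in> C" if "Const c \<in> terms B" for c
    using that T r unfolding assms(4) consts_trans_def consts_of_def B_def by blast
  have gC: "g c = c" if "c \<in> C" for c using that unfolding g_def ext_id_def by simp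
  have st: "subst_term \<theta>2 t = rename_term g (subst_term \<theta>1 t)" if "t \<in> terms B" for t
  proof (cases t)
    case (Var x) then show ?thesis by (simp add: \<theta>2_def)
  next
    case (Const c) then show ?thesis using BC[of c] that gC by simp
  qed
  have stD: "subst_term \<theta>1 t \<in> DD (consts_of s1)" if "t \<in> terms B" for t
  proof (cases t)
    case (Var x)
    then have "x \<in> vars_of B" using that unfolding vars_of_def by simp
    then show ?thesis using th Var unfolding B_def DD_def by auto
  next
    case (Const c) then show ?thesis using BC[of c] that Csub unfolding DD_def by auto
  qed
  have sa: "subst_atom \<theta>2 a = ren (subst_atom \<theta>1 a)" if "a \<in> B" for a
    using st terms_mem[OF that] unfolding subst_atom_def ren_def by auto
  have s1D: "t \<in> DD (consts_of s1)" if "t \<in> terms s1" for t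
    using that unfolding DD_def consts_of_def by auto
  have renj: "a = a'" if "ren a = ren a'" "\<forall>t\<in>set (snd a). t \<in> DD (consts_of s1)"
     "\<forall>t\<in>set (snd a'). t \<in> DD (consts_of s1)" for a a'
  proof -
    have "inj_on (rename_term g) (set (snd a) \<union> set (snd a'))"
      using inj_on_subset[OF rinj] that(2,3) by blast
    then have "snd a = snd a'" using that(1) map_inj_on unfolding ren_def by fastforce
    moreover have "fst a = fst a'" using that(1) unfolding ren_def by simp
    ultimately show ?thesis by (simp add: prod_eq_iff)
  qed
  have sub: "subst_set B \<theta>1 \<subseteq> s1 \<longleftrightarrow> subst_set B \<theta>2 \<subseteq> s2"
  proof
    assume "subst_set B \<theta>1 \<subseteq> s1"
    then show "subst_set B \<theta>2 \<subseteq> s2" using sa s2 unfolding subst_set_def by auto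
  next
    assume h: "subst_set B \<theta>2 \<subseteq> s2"
    show "subst_set B \<theta>1 \<subseteq> s1"
    proof
      fix x assume "x \<in> subst_set B \<theta>1"
      then obtain a where a: "a \<in> B" "x = subst_atom \<theta>1 a" unfolding subst_set_def by blast
      then have "ren x \<in> s2" using h sa unfolding subst_set_def by auto
      then obtain a' where a': "a' \<in> s1" "ren x = ren a'" using s2 by auto
      have "\<forall>t\<in>set (snd x). t \<in> DD (consts_of s1)"
        using a stD terms_mem[OF a(1)] unfolding subst_atom_def by auto
      moreover have "\<forall>t\<in>set (snd a'). t \<in> DD (consts_of s1)"
        using s1D terms_mem[OF a'(1)] by blast
      ultimately have "x = a'" using renj a' by blast
      then show "x \<in> s1" using a' by simp
    qed
  qed
  have inj: "inj_on (subst_term \<theta>1) (terms B) \<longleftrightarrow> inj_on (subst_term \<theta>2) (terms B)"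
  proof
    assume h: "inj_on (subst_term \<theta>1) (terms B)"
    have "inj_on (rename_term g \<circ> subst_term \<theta>1) (terms B)"
      using comp_inj_on[OF h] inj_on_subset[OF rinj] stD by blast
    then show "inj_on (subst_term \<theta>2) (terms B)"
      using st unfolding inj_on_def by simp
  next
    assume h: "inj_on (subst_term \<theta>2) (terms B)"
    show "inj_on (subst_term \<theta>1) (terms B)"
      using h st unfolding inj_on_def by metis
  qed
  show "oi_subsumes s1 \<theta>1 (rbody r) \<longleftrightarrow>
            oi_subsumes s2 (\<lambda>x. rename_term (ext_id C f) (\<theta>1 x)) (rbody r)"
    using sub inj unfolding oi_subsumes_def B_def \<theta>2_def g_def by simp
qed

end
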